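(* Let $(\mathcal J_1,\mathcal J_2,\mathcal J_3)$ be a generalized almost hypercomplex structure and $D$ a generalized connection on a Courant algebroid $E$ with $D\mathcal J_1=0$. Define $D^{(1)}_u:=D_u-\frac12\mathcal J_2(D_u\mathcal J_2)$ and $\tilde D:=D^{(1)}-\frac16\tilde\pi(T^{D^{(1)}})$, where $\tilde\pi:\Lambda^3E^*\to E^*\otimes\Lambda^2E^*$ is $(\tilde\pi\alpha)(u,v,w)=\alpha(u,v,w)+\sum_{i=1}^3\alpha(u,\mathcal J_iv,\mathcal J_iw)$ and, for $\eta\in E^*\otimes\Lambda^2E^*$, $D^{(1)}+\eta$ means $\langle(D^{(1)}+\eta)_uv,w\rangle=\langle D^{(1)}_uv,w\rangle+\eta(u,v,w)$. Then $D^{(1)}$ and $\tilde D$ are generalized connections preserving each $\mathcal J_i$, $i=1,2,3$, and $$T^{\tilde D}(u,v,w)=\tfrac16\sum_{i=1}^3N_{\mathcal J_i}(u,v,w).$$ In particular, if $(\mathcal J_1,\mathcal J_2,\mathcal J_3)$ is a generalized hypercomplex structure, then $\tilde D$ is torsion-free (and hypercomplex).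
   Context: A Courant algebroid on $M$ is a real vector bundle $E\to M$ with nondegenerate symmetric bilinear form $\langle\cdot,\cdot\rangle$, an $\mathbb R$-bilinear bracket $[\cdot,\cdot]$ on $\Gamma(E)$ and bundle map $\pi:E\to TM$ such that for $u,v,w\in\Gamma(E)$, $f\in C^\infty(M)$: $[u,[v,w]]=[[u,v],w]+[v,[u,w]]$; $\pi([u,v])=[\pi(u),\pi(v)]$; $[u,fv]=\pi(u)(f)v+f[u,v]$; $\pi(u)\langle v,w\rangle=\langle[u,v],w\rangle+\langle v,[u,w]\rangle$; $2\langle[u,u],v\rangle=\pi(v)\langle u,u\rangle$. A generalized connection is an $\mathbb R$-linear $D:\Gamma(E)\to\Gamma(E^*\otimes E)$ with $D_u(fv)=\pi(u)(f)v+fD_uv$ and $\pi(u)\langle v,w\rangle=\langle D_uv,w\rangle+\langle v,D_uw\rangle$; its torsion $T^D(u,v)=D_uv-D_vu-[u,v]+(Du)^*v$ ($(Du)^*$ adjoint of $w\mapsto D_wu$) is viewed as the 3-form $T^D(u,v,w)=\langle T^D(u,v),w\rangle$. A generalized almost complex structure is a $\langle\cdot,\cdot\rangle$-orthogonal $\mathcal J$ with $\mathcal J^2=-\mathrm{Id}$; $N_{\mathcal J}(u,v)=[\mathcal Ju,\mathcal Jv]-[u,v]-\mathcal J([\mathcal Ju,v]+[u,\mathcal Jv])$, viewed as the 3-form $\langle N_{\mathcal J}(u,v),w\rangle$. A generalized almost hypercomplex structure is a triple of pairwise anticommuting generalized almost complex structures with $\mathcal J_3=\mathcal J_1\mathcal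 J_2$; it is a generalized hypercomplex structure if every $N_{\mathcal J_i}=0$. *)

theory Defs
  imports Complex_Main
begin

text \<open>Sections of E form the type 's,
 smooth functions form the commutative real algebra 'f (containing the real
 constants via of_real); sm is the C-infinity-module action on sections,
 anc the anchor (anc u is the vector field pi(u) acting on functions),
 ip the fibrewise pairing and br the bracket.\<close>

definition module_action :: "('f::{comm_ring_1,real_algebra_1} \<Rightarrow> 's::real_vector \<Rightarrow> 's) \<Rightarrow> bool" where
  "module_action sm \<longleftrightarrow>
     (\<forall>f g u. sm (f * g) u = sm f (sm g u)) \<and> (\<forall>u. sm 1 u = u) \<and>
     (\<forall>f u v. sm f (u + v) = sm f u + sm f v) \<and>
     (\<forall>f g u. sm (f + g) u = sm f u + sm g u) \<and>
     (\<forall>c u. sm (of_real c) u = c *\<^sub>R u)"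

definition bundle_endo :: "('f::{comm_ring_1,real_algebra_1} \<Rightarrow> 's::real_vector \<Rightarrow> 's) \<Rightarrow> ('s \<Rightarrow> 's) \<Rightarrow> bool" where
  "bundle_endo sm \<phi> \<longleftrightarrow> (\<forall>u v. \<phi> (u + v) = \<phi> u + \<phi> v) \<and> (\<forall>f u. \<phi> (sm f u) = sm f (\<phi> u))"

definition bundle_functional :: "('f::{comm_ring_1,real_algebra_1} \<Rightarrow> 's::real_vector \<Rightarrow> 's) \<Rightarrow> ('s \<Rightarrow> 'f) \<Rightarrow> bool" where
  "bundle_functional sm \<alpha> \<longleftrightarrow> (\<forall>u v. \<alpha> (u + v) = \<alpha> u + \<alpha> v) \<and> (\<forall>f u. \<alpha> (sm f u) = f * \<alpha> u)"

definition is_anchor :: "('f::{comm_ring_1,real_algebra_1} \<Rightarrow> 's::real_vector \<Rightarrow> 's) \<Rightarrow> ('s \<Rightarrow> 'f \<Rightarrow> 'f) \<Rightarrow> bool" where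
  "is_anchor sm anc \<longleftrightarrow>
     (\<forall>u f g. anc u (f + g) = anc u f + anc u g) \<and>
     (\<forall>u f g. anc u (f * g) = anc u f * g + f * anc u g) \<and>
     (\<forall>u c f. anc u (c *\<^sub>R f) = c *\<^sub>R anc u f) \<and>
     (\<forall>u v f. anc (u + v) f = anc u f + anc v f) \<and>
     (\<forall>g u f. anc (sm g u) f = g * anc u f)"

text \<open>Nondegenerate symmetric C-infinity-bilinear form; as for a finite-rank
 bundle with a nondegenerate fibre metric, every section of E^* is of the form
 ip x (musical isomorphism).\<close>
definition is_metric :: "('f::{comm_ring_1,real_algebra_1} \<Rightarrow> 's::real_vector \<Rightarrow> 's) \<Rightarrow> ('s \<Rightarrow> 's \<Rightarrow> 'f) \<Rightarrow> bool" where
  "is_metric sm ip \<longleftrightarrow>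
     (\<forall>u v. ip u v = ip v u) \<and>
     (\<forall>u v w. ip (u + v) w = ip u w + ip v w) \<and>
     (\<forall>f u w. ip (sm f u) w = f * ip u w) \<and>
     (\<forall>v. (\<forall>w. ip v w = 0) \<longrightarrow> v = 0) \<and>
     (\<forall>\<alpha>. bundle_functional sm \<alpha> \<longrightarrow> (\<exists>x. \<forall>w. ip x w = \<alpha> w))"

definition courant_algebroid ::
  "('f::{comm_ring_1,real_algebra_1} \<Rightarrow> 's::real_vector \<Rightarrow> 's) \<Rightarrow> ('s \<Rightarrow> 'f \<Rightarrow> 'f) \<Rightarrow>
   ('s \<Rightarrow> 's \<Rightarrow> 'f) \<Rightarrow> ('s \<Rightarrow> 's \<Rightarrow> 's) \<Rightarrow> bool" where
  "courant_algebroid sm anc ip br \<longleftrightarrow>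
     module_action sm \<and> is_anchor sm anc \<and> is_metric sm ip \<and>
     (\<forall>u. linear (br u)) \<and> (\<forall>v. linear (\<lambda>u. br u v)) \<and>
     (\<forall>u v w. br u (br v w) = br (br u v) w + br v (br u w)) \<and>
     (\<forall>u v f. anc (br u v) f = anc u (anc v f) - anc v (anc u f)) \<and>
     (\<forall>u v f. br u (sm f v) = sm (anc u f) v + sm f (br u v)) \<and>
     (\<forall>u v w. anc u (ip v w) = ip (br u v) w + ip v (br u w)) \<and>
     (\<forall>u v. 2 * ip (br u u) v = anc v (ip u u))"

definition gen_connection ::
  "('f::{comm_ring_1,real_algebra_1} \<Rightarrow> 's::real_vector \<Rightarrow> 's) \<Rightarrow> ('s \<Rightarrow> 'f \<Rightarrow> 'f) \<Rightarrow>
   ('s \<Rightarrow> 's \<Rightarrow> 'f) \<Rightarrow> ('s \<Rightarrow> 's \<Rightarrow> 's) \<Rightarrow> bool" where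
  "gen_connection sm anc ip D \<longleftrightarrow>
     (\<forall>u. linear (D u)) \<and>
     (\<forall>u u' v. D (u + u') v = D u v + D u' v) \<and>
     (\<forall>f u v. D (sm f u) v = sm f (D u v)) \<and>
     (\<forall>u f v. D u (sm f v) = sm (anc u f) v + sm f (D u v)) \<and>
     (\<forall>u v w. anc u (ip v w) = ip (D u v) w + ip v (D u w))"

definition cov_deriv_endo :: "('s \<Rightarrow> 's \<Rightarrow> 's::real_vector) \<Rightarrow> ('s \<Rightarrow> 's) \<Rightarrow> 's \<Rightarrow> 's \<Rightarrow> 's" where
  "cov_deriv_endo D J u v = D u (J v) - J (D u v)"

definition preserves :: "('s \<Rightarrow> 's \<Rightarrow> 's::real_vector) \<Rightarrow> ('s \<Rightarrow> 's) \<Rightarrow> bool" where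
  "preserves D J \<longleftrightarrow> (\<forall>u v. cov_deriv_endo D J u v = 0)"

definition gen_almost_complex ::
  "('f::{comm_ring_1,real_algebra_1} \<Rightarrow> 's::real_vector \<Rightarrow> 's) \<Rightarrow> ('s \<Rightarrow> 's \<Rightarrow> 'f) \<Rightarrow> ('s \<Rightarrow> 's) \<Rightarrow> bool" where
  "gen_almost_complex sm ip J \<longleftrightarrow>
     bundle_endo sm J \<and> (\<forall>u. J (J u) = - u) \<and> (\<forall>u v. ip (J u) (J v) = ip u v)"

definition gen_almost_hypercomplex ::
  "('f::{comm_ring_1,real_algebra_1} \<Rightarrow> 's::real_vector \<Rightarrow> 's) \<Rightarrow> ('s \<Rightarrow> 's \<Rightarrow> 'f) \<Rightarrow>
   ('s \<Rightarrow> 's) \<Rightarrow> ('s \<Rightarrow> 's) \<Rightarrow> ('s \<Rightarrow> 's) \<Rightarrow> bool" where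
  "gen_almost_hypercomplex sm ip J1 J2 J3 \<longleftrightarrow>
     gen_almost_complex sm ip J1 \<and> gen_almost_complex sm ip J2 \<and> gen_almost_complex sm ip J3 \<and>
     (\<forall>u. J1 (J2 u) = - J2 (J1 u)) \<and> (\<forall>u. J1 (J3 u) = - J3 (J1 u)) \<and>
     (\<forall>u. J2 (J3 u) = - J3 (J2 u)) \<and> (\<forall>u. J3 u = J1 (J2 u))"

definition nijenhuis_form ::
  "('s \<Rightarrow> 's \<Rightarrow> 's::real_vector) \<Rightarrow> ('s \<Rightarrow> 's \<Rightarrow> 'f) \<Rightarrow> ('s \<Rightarrow> 's) \<Rightarrow> 's \<Rightarrow> 's \<Rightarrow> 's \<Rightarrow> 'f" where
  "nijenhuis_form br ip J u v w =
     ip (br (J u) (J v) - br u v - J (br (J u) v + br u (J v))) w"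

definition gen_hypercomplex ::
  "('f::{comm_ring_1,real_algebra_1} \<Rightarrow> 's::real_vector \<Rightarrow> 's) \<Rightarrow> ('s \<Rightarrow> 's \<Rightarrow> 'f) \<Rightarrow> ('s \<Rightarrow> 's \<Rightarrow> 's) \<Rightarrow>
   ('s \<Rightarrow> 's) \<Rightarrow> ('s \<Rightarrow> 's) \<Rightarrow> ('s \<Rightarrow> 's) \<Rightarrow> bool" where
  "gen_hypercomplex sm ip br J1 J2 J3 \<longleftrightarrow>
     gen_almost_hypercomplex sm ip J1 J2 J3 \<and>
     (\<forall>u v w. nijenhuis_form br ip J1 u v w = 0) \<and>
     (\<forall>u v w. nijenhuis_form br ip J2 u v w = 0) \<and>
     (\<forall>u v w. nijenhuis_form br ip J3 u v w = 0)"

text \<open>Torsion as a 3-form: T(u,v,w) = <D_u v - D_v u - [u,v], w> + <(Du)^* v, w>,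
 where <(Du)^* v, w> = <v, D_w u>.\<close>
definition torsion_form ::
  "('s \<Rightarrow> 's \<Rightarrow> 's::real_vector) \<Rightarrow> ('s \<Rightarrow> 's \<Rightarrow> 's) \<Rightarrow> ('s \<Rightarrow> 's \<Rightarrow> 'f::comm_ring_1) \<Rightarrow> 's \<Rightarrow> 's \<Rightarrow> 's \<Rightarrow> 'f" where
  "torsion_form D br ip u v w = ip (D u v - D v u - br u v) w + ip v (D w u)"

definition D_one :: "('s \<Rightarrow> 's \<Rightarrow> 's::real_vector) \<Rightarrow> ('s \<Rightarrow> 's) \<Rightarrow> 's \<Rightarrow> 's \<Rightarrow> 's" where
  "D_one D J2 u v = D u v - (1/2) *\<^sub>R J2 (cov_deriv_endo D J2 u v)"

definition pi_tilde ::
  "('s \<Rightarrow> 's) \<Rightarrow> ('s \<Rightarrow> 's) \<Rightarrow> ('s \<Rightarrow> 's) \<Rightarrow> ('s \<Rightarrow> 's \<Rightarrow> 's \<Rightarrow> 'f::plus) \<Rightarrow> 's \<Rightarrow> 's \<Rightarrow> 's \<Rightarrow> 'f" where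
  "pi_tilde J1 J2 J3 \<alpha> u v w =
     \<alpha> u v w + \<alpha> u (J1 v) (J1 w) + \<alpha> u (J2 v) (J2 w) + \<alpha> u (J3 v) (J3 w)"

definition conn_plus ::
  "('s \<Rightarrow> 's \<Rightarrow> 'f::real_vector) \<Rightarrow> ('s \<Rightarrow> 's \<Rightarrow> 's) \<Rightarrow> ('s \<Rightarrow> 's \<Rightarrow> 's \<Rightarrow> 'f) \<Rightarrow> 's \<Rightarrow> 's \<Rightarrow> 's" where
  "conn_plus ip D \<eta> u v = (THE x. \<forall>w. ip x w = ip (D u v) w + \<eta> u v w)"

definition D_tilde ::
  "('s \<Rightarrow> 's \<Rightarrow> 'f::{comm_ring_1,real_algebra_1}) \<Rightarrow> ('s \<Rightarrow> 's \<Rightarrow> 's::real_vector) \<Rightarrow> ('s \<Rightarrow> 's \<Rightarrow> 's) \<Rightarrow>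
   ('s \<Rightarrow> 's) \<Rightarrow> ('s \<Rightarrow> 's) \<Rightarrow> ('s \<Rightarrow> 's) \<Rightarrow> 's \<Rightarrow> 's \<Rightarrow> 's" where
  "D_tilde ip br D J1 J2 J3 =
     conn_plus ip (D_one D J2)
       (\<lambda>u v w. - ((1/6) *\<^sub>R pi_tilde J1 J2 J3 (torsion_form (D_one D J2) br ip) u v w))"

end

theory Submission
  imports Defs
begin

locale P44 =
  fixes sm :: "'f::{comm_ring_1,real_algebra_1} \<Rightarrow> 's::real_vector \<Rightarrow> 's"
    and anc :: "'s \<Rightarrow> 'f \<Rightarrow> 'f"
    and ip :: "'s \<Rightarrow> 's \<Rightarrow> 'f"
    and br :: "'s \<Rightarrow> 's \<Rightarrow> 's"
    and D :: "'s \<Rightarrow> 's \<Rightarrow> 's"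
    and J1 J2 J3 :: "'s \<Rightarrow> 's"
  assumes CA: "courant_algebroid sm anc ip br"
    and HC: "gen_almost_hypercomplex sm ip J1 J2 J3"
    and GC: "gen_connection sm anc ip D"
    and PJ1: "preserves D J1"
begin

lemma MA: "module_action sm" by (rule CA[unfolded courant_algebroid_def, THEN conjunct1])
lemma AN: "is_anchor sm anc" by (rule CA[unfolded courant_algebroid_def, THEN conjunct2, THEN conjunct1])
lemma ME: "is_metric sm ip" by (rule CA[unfolded courant_algebroid_def, THEN conjunct2, THEN conjunct2, THEN conjunct1])

lemma sm_mult: "sm (f * g) u = sm f (sm g u)" by (rule MA[unfolded module_action_def, THEN conjunct1, rule_format])
lemma sm_add: "sm f (u + v) = sm f u + sm f v" by (rule MA[unfolded module_action_def, THEN conjunct2, THEN conjunct2, THEN conjunct1, rule_format])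
lemma sm_of_real: "sm (of_real c) u = c *\<^sub>R u" by (rule MA[unfolded module_action_def, THEN conjunct2, THEN conjunct2, THEN conjunct2, THEN conjunct2, rule_format])
lemma sm_zero: "sm f 0 = 0" using sm_add[of f 0 0] by (simp only: add_0_left add_cancel_right_left)
lemma sm_minus: "sm f (- u) = - sm f u" proof -
  have "sm f u + sm f (- u) = 0" by (simp only: sm_add[symmetric] add.right_inverse sm_zero)
  then show ?thesis by (rule minus_unique[symmetric])
qed
lemma sm_diff: "sm f (u - v) = sm f u - sm f v" by (simp only: diff_conv_add_uminus sm_add sm_minus)
lemma sm_scaleR: "sm f (c *\<^sub>R u) = c *\<^sub>R sm f u"
  proof -
    have "sm f (sm (of_real c) u) = sm (of_real c) (sm f u)" by (simp only: sm_mult[symmetric] mult.commute)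
    then show ?thesis by (simp only: sm_of_real)
  qed

lemma ip_sym: "ip u v = ip v u" by (rule ME[unfolded is_metric_def, THEN conjunct1, rule_format])
lemma ip_addL: "ip (u + v) w = ip u w + ip v w" by (rule ME[unfolded is_metric_def, THEN conjunct2, THEN conjunct1, rule_format])
lemma ip_addR: "ip w (u + v) = ip w u + ip w v" using ip_addL[of u v w] by (simp only: ip_sym[of w "u+v"] ip_sym[of w u] ip_sym[of w v])
lemma ip_smL: "ip (sm f u) w = f * ip u w" by (rule ME[unfolded is_metric_def, THEN conjunct2, THEN conjunct2, THEN conjunct1, rule_format])
lemma ip_smR: "ip w (sm f u) = f * ip w u" using ip_smL[of f u w] by (simp only: ip_sym[of w "sm f u"] ip_sym[of w u])
lemma ip_zeroL: "ip 0 w = 0" using ip_addL[of 0 0 w] by simp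
lemma ip_zeroR: "ip w 0 = 0" using ip_zeroL[of w] by (simp only: ip_sym[of w 0])
lemma ip_minusL: "ip (- u) w = - ip u w" proof -
  have "ip u w + ip (- u) w = 0" by (simp only: ip_addL[symmetric] add.right_inverse ip_zeroL)
  then show ?thesis by (rule minus_unique[symmetric])
qed
lemma ip_minusR: "ip w (- u) = - ip w u" using ip_minusL[of u w] by (simp only: ip_sym[of w "- u"] ip_sym[of w u])
lemma ip_diffL: "ip (u - v) w = ip u w - ip v w" by (simp only: diff_conv_add_uminus ip_addL ip_minusL)
lemma ip_diffR: "ip w (u - v) = ip w u - ip w v" by (simp only: diff_conv_add_uminus ip_addR ip_minusR)
lemma ip_scaleL: "ip (c *\<^sub>R u) w = c *\<^sub>R ip u w"
  using ip_smL[of "of_real c" u w] by (simp only: sm_of_real scaleR_conv_of_real)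
lemma ip_scaleR: "ip w (c *\<^sub>R u) = c *\<^sub>R ip w u" using ip_scaleL[of c u w] by (simp only: ip_sym[of w "c *\<^sub>R u"] ip_sym[of w u])
lemmas ip_simps = ip_addL ip_addR ip_smL ip_smR ip_zeroL ip_zeroR ip_minusL ip_minusR ip_diffL ip_diffR ip_scaleL ip_scaleR

lemma ip_ext: assumes "\<And>w. ip x w = ip y w" shows "x = y"
proof -
  have "\<forall>w. ip (x - y) w = 0" using assms by (simp add: ip_diffL)
  then show "x = y" using ME[unfolded is_metric_def, THEN conjunct2, THEN conjunct2, THEN conjunct2, THEN conjunct1, rule_format, of "x - y"] by simp
qed

lemma ip_repr: "bundle_functional sm \<alpha> \<Longrightarrow> \<exists>x. \<forall>w. ip x w = \<alpha> w"
  using ME[unfolded is_metric_def, THEN conjunct2, THEN conjunct2, THEN conjunct2, THEN conjunct2, rule_format] .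

lemma anc_add: "anc u (f + g) = anc u f + anc u g" using AN by (simp add: is_anchor_def)
lemma anc_scale: "anc u (c *\<^sub>R f) = c *\<^sub>R anc u f" using AN by (simp add: is_anchor_def)
lemma anc_addL: "anc (u + v) f = anc u f + anc v f" using AN by (simp add: is_anchor_def)

lemma br_lin1: "linear (br u)" by (rule CA[unfolded courant_algebroid_def, THEN conjunct2, THEN conjunct2, THEN conjunct2, THEN conjunct1, rule_format])
lemma br_lin2: "linear (\<lambda>u. br u v)" by (rule CA[unfolded courant_algebroid_def, THEN conjunct2, THEN conjunct2, THEN conjunct2, THEN conjunct2, THEN conjunct1, rule_format])
lemma br_addR: "br u (x + y) = br u x + br u y" using linear_add[OF br_lin1] .
lemma br_addL: "br (x + y) u = br x u + br y u" using linear_add[OF br_lin2, of x y u] by simp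
lemma br_leib: "br u (sm f v) = sm (anc u f) v + sm f (br u v)" by (rule CA[unfolded courant_algebroid_def, THEN conjunct2, THEN conjunct2, THEN conjunct2, THEN conjunct2, THEN conjunct2, THEN conjunct2, THEN conjunct2, THEN conjunct1, rule_format])
lemma br_metric: "anc u (ip v w) = ip (br u v) w + ip v (br u w)" by (rule CA[unfolded courant_algebroid_def, THEN conjunct2, THEN conjunct2, THEN conjunct2, THEN conjunct2, THEN conjunct2, THEN conjunct2, THEN conjunct2, THEN conjunct2, THEN conjunct1, rule_format])
lemma br_self: "2 * ip (br u u) v = anc v (ip u u)" by (rule CA[unfolded courant_algebroid_def, THEN conjunct2, THEN conjunct2, THEN conjunct2, THEN conjunct2, THEN conjunct2, THEN conjunct2, THEN conjunct2, THEN conjunct2, THEN conjunct2, rule_format])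

lemma two_cancel: assumes "(2::'f) * x = 2 * y" shows "x = y"
proof -
  have "of_real (1/2) * (2 * x) = of_real (1/2) * (2 * y)" using assms by simp
  moreover have "\<And>z::'f. of_real (1/2) * (2 * z) = z"
  proof -
    fix z :: 'f
    have "(of_real (1/2)::'f) * 2 = of_real (1/2 * 2)" by (simp only: of_real_mult of_real_numeral)
    then have "(of_real (1/2)::'f) * 2 = 1" by simp
    then show "of_real (1/2) * (2 * z) = z" by (simp add: mult.assoc[symmetric])
  qed
  ultimately show ?thesis by simp
qed

lemma br_symm: "ip (br u v) w + ip (br v u) w = anc w (ip u v)"
proof -
  have e1: "br (u+v) (u+v) = br u u + br v u + (br u v + br v v)" by (simp only: br_addL br_addR)
  have e2: "ip (u+v) (u+v) = ip u u + ip u v + (ip u v + ip v v)"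
    by (simp only: ip_addL ip_addR ip_sym[of v u])
  have "2 * ip (br (u+v) (u+v)) w = anc w (ip (u+v) (u+v))" by (rule br_self)
  then have h: "2 * (ip (br u u) w + ip (br v u) w + (ip (br u v) w + ip (br v v) w))
      = anc w (ip u u) + anc w (ip u v) + (anc w (ip u v) + anc w (ip v v))"
    unfolding e1 e2 by (simp only: ip_addL anc_add)
  have h1: "2 * ip (br u u) w = anc w (ip u u)" by (rule br_self)
  have h2: "2 * ip (br v v) w = anc w (ip v v)" by (rule br_self)
  have "2 * ip (br u u) w + 2 * ip (br v u) w + (2 * ip (br u v) w + 2 * ip (br v v) w)
      = anc w (ip u u) + anc w (ip u v) + (anc w (ip u v) + anc w (ip v v))"
    using h by (simp only: distrib_left)
  then have "anc w (ip u u) + 2 * ip (br v u) w + (2 * ip (br u v) w + anc w (ip v v))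
      = anc w (ip u u) + anc w (ip u v) + (anc w (ip u v) + anc w (ip v v))"
    by (simp only: h1 h2)
  then have "2 * ip (br u v) w + 2 * ip (br v u) w = anc w (ip u v) + anc w (ip u v)"
    by (simp add: algebra_simps)
  then have "2 * (ip (br u v) w + ip (br v u) w) = 2 * anc w (ip u v)"
    by (simp only: distrib_left mult_2[of "anc w (ip u v)"])
  then show ?thesis by (rule two_cancel)
qed

context fixes J assumes GJ: "gen_almost_complex sm ip J" begin
lemma J_add: "J (u + v) = J u + J v" using GJ by (simp add: gen_almost_complex_def bundle_endo_def)
lemma J_sm: "J (sm f u) = sm f (J u)" using GJ by (simp add: gen_almost_complex_def bundle_endo_def)
lemma J_J: "J (J u) = - u" using GJ by (simp add: gen_almost_complex_def)
lemma ip_JJ: "ip (J u) (J v) = ip u v" using GJ by (simp add: gen_almost_complex_def)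
lemma J_zero: "J 0 = 0" using J_add[of 0 0] by simp
lemma J_minus: "J (- u) = - J u" proof -
  have "J u + J (- u) = 0" by (simp only: J_add[symmetric] add.right_inverse J_zero)
  then show ?thesis by (rule minus_unique[symmetric])
qed
lemma J_diff: "J (u - v) = J u - J v" by (simp only: diff_conv_add_uminus J_add J_minus)
lemma J_scale: "J (c *\<^sub>R u) = c *\<^sub>R J u" using J_sm[of "of_real c" u] by (simp only: sm_of_real)
lemma ip_JL: "ip (J u) v = - ip u (J v)"
  using ip_JJ[of "J u" v] by (simp add: J_J ip_minusL)
lemma ip_JR: "ip u (J v) = - ip (J u) v" by (simp add: ip_JL)
lemma J_lin: "linear J" by (simp add: linear_iff J_add J_scale)
lemmas J_simps = J_add J_sm J_J J_zero J_minus J_diff J_scale ip_JJ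
end

lemma GJ1: "gen_almost_complex sm ip J1" using HC unfolding gen_almost_hypercomplex_def by (rule conjunct1)
lemma GJ2: "gen_almost_complex sm ip J2" using HC unfolding gen_almost_hypercomplex_def by (elim conjE)
lemma GJ3: "gen_almost_complex sm ip J3" using HC unfolding gen_almost_hypercomplex_def by (elim conjE)
lemma J3_def: "J3 u = J1 (J2 u)"
  using HC unfolding gen_almost_hypercomplex_def by (elim conjE) (erule allE)
lemma J12: "J1 (J2 u) = - J2 (J1 u)"
  using HC unfolding gen_almost_hypercomplex_def by (elim conjE) (erule allE)
lemma J21: "J2 (J1 u) = - J3 u"
  by (simp only: J3_def J12 minus_minus)
lemma J13: "J1 (J3 u) = - J2 u" by (simp only: J3_def J_J[OF GJ1])
lemma J31: "J3 (J1 u) = J2 u"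
  by (simp only: J3_def J12 J_minus[OF GJ1] J_minus[OF GJ2] J_J[OF GJ1] J_J[OF GJ2] minus_minus)
lemma J23: "J2 (J3 u) = J1 u"
  by (simp only: J3_def J12 J_J[OF GJ2] J_minus[OF GJ2] minus_minus)
lemma J32: "J3 (J2 u) = - J1 u" by (simp only: J3_def J_J[OF GJ2] J_minus[OF GJ1])

context fixes Dc assumes GD: "gen_connection sm anc ip Dc" begin
lemma C_lin: "linear (Dc u)" by (rule GD[unfolded gen_connection_def, THEN conjunct1, rule_format])
lemma C_addR: "Dc u (x + y) = Dc u x + Dc u y" using linear_add[OF C_lin] .
lemma C_scaleR: "Dc u (c *\<^sub>R x) = c *\<^sub>R Dc u x" using linear_scale[OF C_lin] .
lemma C_minusR: "Dc u (- x) = - Dc u x" using linear_neg[OF C_lin] .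
lemma C_diffR: "Dc u (x - y) = Dc u x - Dc u y" using linear_diff[OF C_lin] .
lemma C_zeroR: "Dc u 0 = 0" using linear_0[OF C_lin] .
lemma C_addL: "Dc (u + u') v = Dc u v + Dc u' v" by (rule GD[unfolded gen_connection_def, THEN conjunct2, THEN conjunct1, rule_format])
lemma C_smL: "Dc (sm f u) v = sm f (Dc u v)" by (rule GD[unfolded gen_connection_def, THEN conjunct2, THEN conjunct2, THEN conjunct1, rule_format])
lemma C_leib: "Dc u (sm f v) = sm (anc u f) v + sm f (Dc u v)" by (rule GD[unfolded gen_connection_def, THEN conjunct2, THEN conjunct2, THEN conjunct2, THEN conjunct1, rule_format])
lemma C_metric: "anc u (ip v w) = ip (Dc u v) w + ip v (Dc u w)" by (rule GD[unfolded gen_connection_def, THEN conjunct2, THEN conjunct2, THEN conjunct2, THEN conjunct2, rule_format])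
lemma C_zeroL: "Dc 0 v = 0" using C_addL[of 0 0 v] by (simp only: add_0_left add_cancel_right_left)
lemma C_minusL: "Dc (- u) v = - Dc u v" proof -
  have "Dc u v + Dc (- u) v = 0" by (simp only: C_addL[symmetric] add.right_inverse C_zeroL)
  then show ?thesis by (rule minus_unique[symmetric])
qed
lemma C_diffL: "Dc (u - u') v = Dc u v - Dc u' v" by (simp only: diff_conv_add_uminus C_addL C_minusL)
lemma C_scaleL: "Dc (c *\<^sub>R u) v = c *\<^sub>R Dc u v" using C_smL[of "of_real c" u v] by (simp only: sm_of_real)

lemma T_sym_vw: "torsion_form Dc br ip u v w = - torsion_form Dc br ip u w v"
proof -
  have "torsion_form Dc br ip u v w + torsion_form Dc br ip u w v
     = (ip (Dc u v) w + ip v (Dc u w)) - (ip (br u v) w + ip v (br u w))"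
    unfolding torsion_form_def
    by (simp add: ip_simps ip_sym[of "Dc u w" v] ip_sym[of "br u w" v] ip_sym[of v "Dc w u"] ip_sym[of w "Dc v u"] algebra_simps)
  also have "\<dots> = 0" by (simp only: C_metric[symmetric] br_metric[symmetric] diff_self)
  finally show ?thesis by (simp add: eq_neg_iff_add_eq_0)
qed

lemma T_sym_uv: "torsion_form Dc br ip u v w = - torsion_form Dc br ip v u w"
proof -
  have "torsion_form Dc br ip u v w + torsion_form Dc br ip v u w
     = (ip (Dc w u) v + ip u (Dc w v)) - (ip (br u v) w + ip (br v u) w)"
    unfolding torsion_form_def
    by (simp add: ip_simps ip_sym[of v "Dc w u"] algebra_simps)
  also have "\<dots> = 0" by (simp only: C_metric[symmetric] br_symm diff_self)
  finally show ?thesis by (simp add: eq_neg_iff_add_eq_0)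
qed

lemma T_cyc: "torsion_form Dc br ip u v w = torsion_form Dc br ip v w u"
  using T_sym_uv[of u v w] T_sym_vw[of v u w] by simp

lemma T_addW: "torsion_form Dc br ip u v (w + w') = torsion_form Dc br ip u v w + torsion_form Dc br ip u v w'"
  unfolding torsion_form_def by (simp add: ip_simps C_addL algebra_simps)
lemma T_smW: "torsion_form Dc br ip u v (sm f w) = f * torsion_form Dc br ip u v w"
  unfolding torsion_form_def by (simp add: ip_simps C_smL algebra_simps)
lemma T_addU: "torsion_form Dc br ip (u + u') v w = torsion_form Dc br ip u v w + torsion_form Dc br ip u' v w"
  using T_addW[of v w u u'] by (simp only: T_cyc[of _ v w])
lemma T_smU: "torsion_form Dc br ip (sm f u) v w = f * torsion_form Dc br ip u v w"
  using T_smW[of v w f u] by (simp only: T_cyc[of _ v w])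
lemma T_addV: "torsion_form Dc br ip u (v + v') w = torsion_form Dc br ip u v w + torsion_form Dc br ip u v' w"
  using T_addW[of w u v v'] by (simp only: T_cyc[of w u, symmetric])
lemma T_smV: "torsion_form Dc br ip u (sm f v) w = f * torsion_form Dc br ip u v w"
  using T_smW[of w u f v] by (simp only: T_cyc[of w u, symmetric])

lemma T_nij: assumes GJ: "gen_almost_complex sm ip J" and PJ: "preserves Dc J"
  shows "nijenhuis_form br ip J u v w = torsion_form Dc br ip u v w - torsion_form Dc br ip (J u) (J v) w
     - torsion_form Dc br ip (J u) v (J w) - torsion_form Dc br ip u (J v) (J w)"
proof -
  have P: "\<And>a b. Dc a (J b) = J (Dc a b)" using PJ by (simp add: preserves_def cov_deriv_endo_def)
  have T: "\<And>a b c. torsion_form Dc br ip a b c = ip (Dc a b) c - ip (Dc b a) c - ip (br a b) c + ip (Dc c a) b"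
    unfolding torsion_form_def by (simp add: ip_simps ip_sym[of _ "Dc _ _"])
  show ?thesis unfolding nijenhuis_form_def T
    by (simp add: ip_simps P ip_JL[OF GJ] J_simps[OF GJ] algebra_simps)
qed
end

end


lemma half_lemma: fixes x y :: "'a::real_vector" shows "x - (1/2) *\<^sub>R (y + x) = (1/2) *\<^sub>R (x - y)"
proof -
  have "x = (1/2) *\<^sub>R x + (1/2) *\<^sub>R x" by (metis scaleR_half_double scaleR_right_distrib)
  then show ?thesis by (simp add: scaleR_right_diff_distrib scaleR_right_distrib algebra_simps)
qed

lemma half_sum: fixes x :: "'a::real_vector" shows "(1/2) *\<^sub>R x + (1/2) *\<^sub>R x = x"
  by (metis scaleR_half_double scaleR_right_distrib)

context P44 begin

lemma D1_eq: "D_one D J2 u v = (1/2) *\<^sub>R (D u v - J2 (D u (J2 v)))"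
proof -
  have "D_one D J2 u v = D u v - (1/2) *\<^sub>R (J2 (D u (J2 v)) + D u v)"
    unfolding D_one_def cov_deriv_endo_def by (simp only: J_diff[OF GJ2] J_J[OF GJ2] diff_minus_eq_add)
  also have "\<dots> = (1/2) *\<^sub>R (D u v - J2 (D u (J2 v)))" by (rule half_lemma)
  finally show ?thesis .
qed

lemma GD1: "gen_connection sm anc ip (D_one D J2)"
  unfolding gen_connection_def
proof (intro conjI allI)
  fix u show "linear (D_one D J2 u)"
    unfolding linear_iff D1_eq
    by (simp add: C_addR[OF GC] C_scaleR[OF GC] J_add[OF GJ2] J_scale[OF GJ2] scaleR_right_diff_distrib scaleR_right_distrib)
next
  fix u u' v show "D_one D J2 (u + u') v = D_one D J2 u v + D_one D J2 u' v"
    unfolding D1_eq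
    by (simp add: C_addL[OF GC] J_add[OF GJ2] scaleR_right_diff_distrib scaleR_right_distrib)
next
  fix f u v show "D_one D J2 (sm f u) v = sm f (D_one D J2 u v)"
    unfolding D1_eq by (simp only: C_smL[OF GC] J_sm[OF GJ2] sm_scaleR sm_diff)
next
  fix u f v show "D_one D J2 u (sm f v) = sm (anc u f) v + sm f (D_one D J2 u v)"
  proof -
    have "D_one D J2 u (sm f v) = (1/2) *\<^sub>R (sm (anc u f) v + sm (anc u f) v) + sm f (D_one D J2 u v)"
      unfolding D1_eq
      by (simp add: C_leib[OF GC] J_sm[OF GJ2] J_add[OF GJ2] J_J[OF GJ2] J_minus[OF GJ2] sm_scaleR sm_diff sm_minus
          scaleR_right_diff_distrib scaleR_right_distrib)
    then show ?thesis by (simp only: scaleR_half_double)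
  qed
next
  fix u v w show "anc u (ip v w) = ip (D_one D J2 u v) w + ip v (D_one D J2 u w)"
  proof -
    have a: "ip (D u v) w + ip v (D u w) = anc u (ip v w)" by (rule C_metric[OF GC, symmetric])
    have b: "ip (D u (J2 v)) (J2 w) + ip (J2 v) (D u (J2 w)) = anc u (ip v w)"
      using C_metric[OF GC, of u "J2 v" "J2 w"] by (simp only: ip_JJ[OF GJ2])
    have "ip (D_one D J2 u v) w + ip v (D_one D J2 u w)
       = (1/2) *\<^sub>R (ip (D u v) w + ip v (D u w)) + (1/2) *\<^sub>R (ip (D u (J2 v)) (J2 w) + ip (J2 v) (D u (J2 w)))"
      unfolding D1_eq
      by (simp add: ip_scaleL ip_scaleR ip_diffL ip_diffR ip_JL[OF GJ2, of "D u (J2 v)" w] ip_JR[OF GJ2, of v "D u (J2 w)"] ip_minusL ip_minusR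
          scaleR_right_diff_distrib scaleR_right_distrib algebra_simps)
    also have "\<dots> = anc u (ip v w)" by (simp only: a b half_sum)
    finally show ?thesis by simp
  qed
qed

lemma PD1_J2: "preserves (D_one D J2) J2"
  unfolding preserves_def cov_deriv_endo_def D1_eq
  by (simp add: J_J[OF GJ2] J_diff[OF GJ2] J_scale[OF GJ2] J_minus[OF GJ2] C_minusR[OF GC] algebra_simps)

lemma PD1_J1: "preserves (D_one D J2) J1"
proof -
  have P: "\<And>a b. D a (J1 b) = J1 (D a b)" using PJ1 by (simp add: preserves_def cov_deriv_endo_def)
  have "\<And>u v. D_one D J2 u (J1 v) = J1 (D_one D J2 u v)"
  proof -
    fix u v
    have "J2 (J1 v) = - J1 (J2 v)" by (simp only: J12 minus_minus)
    then have "D u (J2 (J1 v)) = - J1 (D u (J2 v))" by (simp only: C_minusR[OF GC] P)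
    then show "D_one D J2 u (J1 v) = J1 (D_one D J2 u v)"
      unfolding D1_eq
      by (simp only: P J_scale[OF GJ1] J_diff[OF GJ1] J_minus[OF GJ2] J12 diff_minus_eq_add minus_minus)
  qed
  then show ?thesis by (simp add: preserves_def cov_deriv_endo_def)
qed

lemma PD1_J3: "preserves (D_one D J2) J3"
  using PD1_J1 PD1_J2 by (simp add: preserves_def cov_deriv_endo_def J3_def)

end


lemma final_arith: fixes t a1 a2 a3 b1 b2 b3 c1 c2 c3 :: "'a::real_vector"
shows "t + -((1/6) *\<^sub>R (t + a1 + a2 + a3)) - -((1/6) *\<^sub>R (-t + -b1 + -b2 + -b3)) + -((1/6) *\<^sub>R (t + c1 + c2 + c3))
   = (1/6) *\<^sub>R ((t - c1 - b1 - a1) + (t - c2 - b2 - a2) + (t - c3 - b3 - a3))"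
proof -
  have "t = (1/6) *\<^sub>R t + (1/6) *\<^sub>R t + (1/6) *\<^sub>R t + (1/6) *\<^sub>R t + (1/6) *\<^sub>R t + (1/6) *\<^sub>R t"
    by (simp add: scaleR_left_distrib[symmetric])
  then show ?thesis by (simp add: scaleR_right_distrib scaleR_right_diff_distrib algebra_simps)
qed

context P44 begin

abbreviation "T1 \<equiv> torsion_form (D_one D J2) br ip"
abbreviation "PT \<equiv> pi_tilde J1 J2 J3 T1"
definition "eta u v w = - ((1/6) *\<^sub>R PT u v w)"

lemmas T1_addW = T_addW[OF GD1] and T1_smW = T_smW[OF GD1]
  and T1_addU = T_addU[OF GD1] and T1_smU = T_smU[OF GD1]
  and T1_addV = T_addV[OF GD1] and T1_smV = T_smV[OF GD1]
  and T1_vw = T_sym_vw[OF GD1] and T1_uv = T_sym_uv[OF GD1] and T1_cyc = T_cyc[OF GD1]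

lemma T1_zeroV: "T1 u 0 w = 0" using T1_addV[of u 0 0 w] by (simp only: add_0_left add_cancel_right_left)
lemma T1_zeroW: "T1 u v 0 = 0" using T1_addW[of u v 0 0] by (simp only: add_0_left add_cancel_right_left)
lemma T1_minusV: "T1 u (- v) w = - T1 u v w"
proof -
  have "T1 u v w + T1 u (- v) w = 0" by (simp only: T1_addV[symmetric] add.right_inverse T1_zeroV)
  then show ?thesis by (rule minus_unique[symmetric])
qed
lemma T1_minusW: "T1 u v (- w) = - T1 u v w"
proof -
  have "T1 u v w + T1 u v (- w) = 0" by (simp only: T1_addW[symmetric] add.right_inverse T1_zeroW)
  then show ?thesis by (rule minus_unique[symmetric])
qed

lemma PT_addW: "PT u v (w + w') = PT u v w + PT u v w'"
  unfolding pi_tilde_def by (simp add: T1_addW J_add[OF GJ1] J_add[OF GJ2] J_add[OF GJ3] algebra_simps)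
lemma PT_smW: "PT u v (sm f w) = f * PT u v w"
  unfolding pi_tilde_def by (simp add: T1_smW J_sm[OF GJ1] J_sm[OF GJ2] J_sm[OF GJ3] algebra_simps)
lemma PT_addV: "PT u (v + v') w = PT u v w + PT u v' w"
  unfolding pi_tilde_def by (simp add: T1_addV J_add[OF GJ1] J_add[OF GJ2] J_add[OF GJ3] algebra_simps)
lemma PT_smV: "PT u (sm f v) w = f * PT u v w"
  unfolding pi_tilde_def by (simp add: T1_smV J_sm[OF GJ1] J_sm[OF GJ2] J_sm[OF GJ3] algebra_simps)
lemma PT_addU: "PT (u + u') v w = PT u v w + PT u' v w"
  unfolding pi_tilde_def by (simp add: T1_addU algebra_simps)
lemma PT_smU: "PT (sm f u) v w = f * PT u v w"
  unfolding pi_tilde_def by (simp add: T1_smU algebra_simps)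
lemma PT_skew: "PT u v w = - PT u w v"
  unfolding pi_tilde_def
  by (simp only: T1_vw[of u v w] T1_vw[of u "J1 v"] T1_vw[of u "J2 v"] T1_vw[of u "J3 v"] minus_add_distrib)
lemma PT_J1: "PT u (J1 v) (J1 w) = PT u v w"
  unfolding pi_tilde_def
  by (simp add: J_J[OF GJ1] J21 J31 J_minus[OF GJ3] T1_smV T1_smW T1_minusV T1_minusW algebra_simps)
lemma PT_J2: "PT u (J2 v) (J2 w) = PT u v w"
  unfolding pi_tilde_def
  by (simp add: J_J[OF GJ2] J12 J32 J_minus[OF GJ1] J_minus[OF GJ2] J21 T1_minusV T1_minusW algebra_simps)
lemma PT_J3: "PT u (J3 v) (J3 w) = PT u v w"
  unfolding pi_tilde_def
  by (simp add: J_J[OF GJ3] J13 J23 T1_minusV T1_minusW algebra_simps)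

end


context P44 begin

lemma eta_addW: "eta u v (w + w') = eta u v w + eta u v w'"
  unfolding eta_def by (simp add: PT_addW scaleR_right_distrib)
lemma eta_smW: "eta u v (sm f w) = f * eta u v w"
  unfolding eta_def by (simp add: PT_smW mult_scaleR_right)
lemma eta_addV: "eta u (v + v') w = eta u v w + eta u v' w"
  unfolding eta_def by (simp add: PT_addV scaleR_right_distrib)
lemma eta_smV: "eta u (sm f v) w = f * eta u v w"
  unfolding eta_def by (simp add: PT_smV mult_scaleR_right)
lemma eta_addU: "eta (u + u') v w = eta u v w + eta u' v w"
  unfolding eta_def by (simp add: PT_addU scaleR_right_distrib)
lemma eta_smU: "eta (sm f u) v w = f * eta u v w"
  unfolding eta_def by (simp add: PT_smU mult_scaleR_right)
lemma eta_scaleV: "eta u (c *\<^sub>R v) w = c *\<^sub>R eta u v w"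
  using eta_smV[of u "of_real c" v w] by (simp only: sm_of_real scaleR_conv_of_real)
lemma eta_skew: "eta u v w = - eta u w v"
  unfolding eta_def by (simp only: PT_skew[of u v w] scaleR_minus_right minus_minus)
lemma eta_J1: "eta u (J1 v) (J1 w) = eta u v w" unfolding eta_def by (simp only: PT_J1)
lemma eta_J2: "eta u (J2 v) (J2 w) = eta u v w" unfolding eta_def by (simp only: PT_J2)
lemma eta_J3: "eta u (J3 v) (J3 w) = eta u v w" unfolding eta_def by (simp only: PT_J3)
lemma eta_zeroV: "eta u 0 w = 0" using eta_addV[of u 0 0 w] by (simp only: add_0_left add_cancel_right_left)
lemma eta_minusV: "eta u (- v) w = - eta u v w"
proof -
  have "eta u v w + eta u (- v) w = 0" by (simp only: eta_addV[symmetric] add.right_inverse eta_zeroV)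
  then show ?thesis by (rule minus_unique[symmetric])
qed

abbreviation "Dt \<equiv> D_tilde ip br D J1 J2 J3"

lemma Dt_char: "ip (Dt u v) w = ip (D_one D J2 u v) w + eta u v w"
proof -
  let ?a = "\<lambda>w. ip (D_one D J2 u v) w + eta u v w"
  have bf: "bundle_functional sm ?a"
    unfolding bundle_functional_def
    by (simp add: ip_addR ip_smR eta_addW eta_smW algebra_simps)
  obtain x where x: "\<forall>w. ip x w = ?a w" using ip_repr[OF bf] by blast
  have "(THE x. \<forall>w. ip x w = ?a w) = x"
  proof (rule the_equality)
    show "\<forall>w. ip x w = ?a w" by (rule x)
  next
    fix y assume "\<forall>w. ip y w = ?a w"
    then show "y = x" using x by (intro ip_ext) simp
  qed
  then have "Dt u v = x" unfolding D_tilde_def conn_plus_def eta_def[symmetric] by simp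
  then show ?thesis using x by simp
qed

end


context P44 begin

lemma GDt: "gen_connection sm anc ip Dt"
  unfolding gen_connection_def
proof (intro conjI allI)
  fix u show "linear (Dt u)"
    unfolding linear_iff
  proof (intro conjI allI)
    fix x y show "Dt u (x + y) = Dt u x + Dt u y"
      by (rule ip_ext) (simp add: Dt_char ip_addL C_addR[OF GD1] eta_addV algebra_simps)
  next
    fix c x show "Dt u (c *\<^sub>R x) = c *\<^sub>R Dt u x"
      by (rule ip_ext) (simp add: Dt_char ip_scaleL C_scaleR[OF GD1] eta_scaleV scaleR_right_distrib)
  qed
next
  fix u u' v show "Dt (u + u') v = Dt u v + Dt u' v"
    by (rule ip_ext) (simp add: Dt_char ip_addL C_addL[OF GD1] eta_addU algebra_simps)
next
  fix f u v show "Dt (sm f u) v = sm f (Dt u v)"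
    by (rule ip_ext) (simp add: Dt_char ip_smL C_smL[OF GD1] eta_smU algebra_simps)
next
  fix u f v show "Dt u (sm f v) = sm (anc u f) v + sm f (Dt u v)"
    by (rule ip_ext) (simp add: Dt_char ip_smL ip_addL C_leib[OF GD1] eta_smV algebra_simps)
next
  fix u v w show "anc u (ip v w) = ip (Dt u v) w + ip v (Dt u w)"
  proof -
    have "ip (Dt u v) w + ip v (Dt u w) = (ip (D_one D J2 u v) w + ip v (D_one D J2 u w)) + (eta u v w + eta u w v)"
      by (simp only: Dt_char ip_sym[of v "Dt u w"] ip_sym[of v "D_one D J2 u w"] add_ac)
    also have "\<dots> = anc u (ip v w)"
      by (simp only: C_metric[OF GD1, symmetric] eta_skew[of u v w] add.left_inverse add_0_right)
    finally show ?thesis by simp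
  qed
qed

lemma PDt: assumes GJ: "gen_almost_complex sm ip J" and P1: "preserves (D_one D J2) J"
  and EJ: "\<And>u v w. eta u (J v) (J w) = eta u v w"
  shows "preserves Dt J"
proof -
  have P: "\<And>a b. D_one D J2 a (J b) = J (D_one D J2 a b)" using P1 by (simp add: preserves_def cov_deriv_endo_def)
  have "\<And>u v. Dt u (J v) = J (Dt u v)"
  proof -
    fix u v show "Dt u (J v) = J (Dt u v)"
    proof (rule ip_ext)
      fix w
      have e: "eta u (J v) w = - eta u v (J w)"
        using EJ[of u "J v" w] by (simp only: J_J[OF GJ] eta_minusV)
      show "ip (Dt u (J v)) w = ip (J (Dt u v)) w"
        by (simp only: Dt_char P ip_JL[OF GJ] e minus_add_distrib)
    qed
  qed
  then show ?thesis by (simp add: preserves_def cov_deriv_endo_def)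
qed

lemma PDt1: "preserves Dt J1" by (rule PDt[OF GJ1 PD1_J1 eta_J1])
lemma PDt2: "preserves Dt J2" by (rule PDt[OF GJ2 PD1_J2 eta_J2])
lemma PDt3: "preserves Dt J3" by (rule PDt[OF GJ3 PD1_J3 eta_J3])

lemma Tt: "torsion_form Dt br ip u v w =
   (1/6) *\<^sub>R (nijenhuis_form br ip J1 u v w + nijenhuis_form br ip J2 u v w + nijenhuis_form br ip J3 u v w)"
proof -
  have "torsion_form Dt br ip u v w = T1 u v w + eta u v w - eta v u w + eta w u v"
    unfolding torsion_form_def ip_diffL
    by (simp add: Dt_char ip_sym[of v "Dt w u"] ip_sym[of v "D_one D J2 w u"] algebra_simps)
  also have "\<dots> = T1 u v w + - ((1/6) *\<^sub>R (T1 u v w + T1 u (J1 v) (J1 w) + T1 u (J2 v) (J2 w) + T1 u (J3 v) (J3 w)))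
     - - ((1/6) *\<^sub>R (- T1 u v w + - T1 (J1 u) v (J1 w) + - T1 (J2 u) v (J2 w) + - T1 (J3 u) v (J3 w)))
     + - ((1/6) *\<^sub>R (T1 u v w + T1 (J1 u) (J1 v) w + T1 (J2 u) (J2 v) w + T1 (J3 u) (J3 v) w))"
    unfolding eta_def pi_tilde_def
    by (simp only: T1_uv[of v u w] T1_uv[of v "J1 u"] T1_uv[of v "J2 u"] T1_uv[of v "J3 u"]
       T1_cyc[of w u v] T1_cyc[of w "J1 u" "J1 v"] T1_cyc[of w "J2 u" "J2 v"] T1_cyc[of w "J3 u" "J3 v"])
  also have "\<dots> = (1/6) *\<^sub>R ((T1 u v w - T1 (J1 u) (J1 v) w - T1 (J1 u) v (J1 w) - T1 u (J1 v) (J1 w))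
      + (T1 u v w - T1 (J2 u) (J2 v) w - T1 (J2 u) v (J2 w) - T1 u (J2 v) (J2 w))
      + (T1 u v w - T1 (J3 u) (J3 v) w - T1 (J3 u) v (J3 w) - T1 u (J3 v) (J3 w)))"
    by (rule final_arith)
  also have "\<dots> = (1/6) *\<^sub>R (nijenhuis_form br ip J1 u v w + nijenhuis_form br ip J2 u v w + nijenhuis_form br ip J3 u v w)"
    by (simp only: T_nij[OF GD1 GJ1 PD1_J1] T_nij[OF GD1 GJ2 PD1_J2] T_nij[OF GD1 GJ3 PD1_J3])
  finally show ?thesis .
qed

end

theorem proposition4p4:
  fixes sm :: "'f::{comm_ring_1,real_algebra_1} \<Rightarrow> 's::real_vector \<Rightarrow> 's"
    and anc :: "'s \<Rightarrow> 'f \<Rightarrow> 'f"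
    and ip :: "'s \<Rightarrow> 's \<Rightarrow> 'f"
    and br :: "'s \<Rightarrow> 's \<Rightarrow> 's"
    and D :: "'s \<Rightarrow> 's \<Rightarrow> 's"
    and J1 J2 J3 :: "'s \<Rightarrow> 's"
  assumes "courant_algebroid sm anc ip br"
    and "gen_almost_hypercomplex sm ip J1 J2 J3"
    and "gen_connection sm anc ip D"
    and "preserves D J1"
  shows "gen_connection sm anc ip (D_one D J2) \<and>
         preserves (D_one D J2) J1 \<and> preserves (D_one D J2) J2 \<and> preserves (D_one D J2) J3 \<and>
         gen_connection sm anc ip (D_tilde ip br D J1 J2 J3) \<and>
         preserves (D_tilde ip br D J1 J2 J3) J1 \<and>
         preserves (D_tilde ip br D J1 J2 J3) J2 \<and>
         preserves (D_tilde ip br D J1 J2 J3) J3 \<and>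
         (\<forall>u v w. torsion_form (D_tilde ip br D J1 J2 J3) br ip u v w =
            (1/6) *\<^sub>R (nijenhuis_form br ip J1 u v w + nijenhuis_form br ip J2 u v w
                        + nijenhuis_form br ip J3 u v w)) \<and>
         (gen_hypercomplex sm ip br J1 J2 J3 \<longrightarrow>
            (\<forall>u v w. torsion_form (D_tilde ip br D J1 J2 J3) br ip u v w = 0))"
proof -
  interpret P: P44 sm anc ip br D J1 J2 J3 using assms by unfold_locales
  have N: "gen_hypercomplex sm ip br J1 J2 J3 \<longrightarrow>
            (\<forall>u v w. torsion_form (D_tilde ip br D J1 J2 J3) br ip u v w = 0)"
  proof (intro impI allI)
    fix u v w assume H: "gen_hypercomplex sm ip br J1 J2 J3"
    have "nijenhuis_form br ip J1 u v w = 0" "nijenhuis_form br ip J2 u v w = 0" "nijenhuis_form br ip J3 u v w = 0"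
      using H unfolding gen_hypercomplex_def by (elim conjE; simp)+
    then show "torsion_form (D_tilde ip br D J1 J2 J3) br ip u v w = 0" by (simp only: P.Tt add_0_left scaleR_zero_right)
  qed
  show ?thesis using P.GD1 P.PD1_J1 P.PD1_J2 P.PD1_J3 P.GDt P.PDt1 P.PDt2 P.PDt3 P.Tt N by blast
qed

end
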